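(* Let $G$ be a Feynman diagram and $A_G\subseteq\mathbb{Z}^n$ the support of $\mathcal{F}_{z,m}$ for generic $(z,m)\in\mathbb{R}^K\times\mathbb{R}^{\mathcal{E}}$. If $a\in A_G\cap A^1_G$ and the coefficient of $x^a$ in $\mathcal{F}_{z,m}$, viewed as a linear function of $(z,m)$, does not depend on any of the $m_e$ ($e\in\mathcal{E}$), then $a$ is a vertex of $\operatorname{conv}(A_G)$.
   Context: $G$ is a connected graph with $n$ internal edges labeled $1,\dots,n$ carrying variables $x_1,\dots,x_n$ and $N$ external edges (edges with an endpoint of degree one), the external ones labeled by $[N]$. $\mathcal{T}$ is the set of spanning trees of $G$ (restricted to internal edges, viewed as subsets of $[n]$); $\ell=\#\text{edges}-\#\text{vertices}+1$. The first Symanzik polynomial is $\mathcal{U}(x)=\sum_{T\in\mathcal{T}}\prod_{e\notin T}x_e$. $\mathcal{W}$ is the set of spanning 2-forests $\{T_1,T_2\}$ (two disjoint acyclic connected subgraphs covering all vertices). Given a linear map $L:\mathbb{R}^K\to\mathbb{R}^{\mathcal{W}}$ and $\mathcal{E}\subseteq[n]$, $\mathcal{F}_{z,m}(x)=\sum_{\{T_1,T_2\}\in\mathcal{W}}L_{T_1,T_2}(z)\prod_{e\notin T_1\sqcup T_2}x_e+\big(\sum_{e\in\mathcal{E}}m_ex_e\big)\mathcal{U}(x)$. Set $A^1_G=\{e_p+\sum_{j\in[n]\setminus T}e_j: T\in\mathcal{T}, p\in T\}$ and $A^2_G=\{2e_q+\sum_{j\in[n]\setminus(T\cup\{q\})}e_j:T\in\mathcal{T},q\notin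 T\}$; $A_G\subseteq A^1_G\cup A^2_G$. *)

theory Defs
  imports "HOL-Analysis.Analysis" "HOL-Library.Function_Algebras"
begin

text \<open>
  The internal part of a Feynman diagram G: a finite vertex set V and internal
  edges given by the elements of a finite type 'e (playing the role of [n]),
  each edge e having endpoints ends e (multi-edges and self-loops allowed).
  External legs only enter through the abstract linear map L and play no
  further role in the statement.
\<close>

definition adj :: "('e \<Rightarrow> 'v \<times> 'v) \<Rightarrow> 'e set \<Rightarrow> ('v \<times> 'v) set" where
  "adj ends S = {(u, v). \<exists>e\<in>S. ends e = (u, v) \<or> ends e = (v, u)}"

definition conn :: "('e \<Rightarrow> 'v \<times> 'v) \<Rightarrow> 'e set \<Rightarrow> 'v \<Rightarrow> 'v \<Rightarrow> bool" where
  "conn ends S u v \<longleftrightarrow> (u, v) \<in> (adj ends S)\<^sup>*"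

text \<open>An edge set is acyclic iff no edge lies on a cycle, i.e. the endpoints of
  each edge e are not joined by a path avoiding e (this also excludes loops).\<close>
definition acyclic_edges :: "('e \<Rightarrow> 'v \<times> 'v) \<Rightarrow> 'e set \<Rightarrow> bool" where
  "acyclic_edges ends S \<longleftrightarrow>
     (\<forall>e\<in>S. \<not> conn ends (S - {e}) (fst (ends e)) (snd (ends e)))"

definition spanning_trees :: "'v set \<Rightarrow> ('e \<Rightarrow> 'v \<times> 'v) \<Rightarrow> 'e set set" where
  "spanning_trees V ends =
     {T. acyclic_edges ends T \<and> (\<forall>u\<in>V. \<forall>v\<in>V. conn ends T u v)}"

definition is_subtree :: "('e \<Rightarrow> 'v \<times> 'v) \<Rightarrow> 'v set \<Rightarrow> 'e set \<Rightarrow> bool" where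
  "is_subtree ends Vi Ti \<longleftrightarrow> Vi \<noteq> {} \<and>
     (\<forall>e\<in>Ti. fst (ends e) \<in> Vi \<and> snd (ends e) \<in> Vi) \<and>
     acyclic_edges ends Ti \<and> (\<forall>u\<in>Vi. \<forall>v\<in>Vi. conn ends Ti u v)"

definition spanning_2forests :: "'v set \<Rightarrow> ('e \<Rightarrow> 'v \<times> 'v) \<Rightarrow> ('v set \<times> 'e set) set set" where
  "spanning_2forests V ends =
     {w. \<exists>V1 T1 V2 T2. w = {(V1, T1), (V2, T2)} \<and> V1 \<inter> V2 = {} \<and> V1 \<union> V2 = V \<and>
          T1 \<inter> T2 = {} \<and> is_subtree ends V1 T1 \<and> is_subtree ends V2 T2}"

text \<open>Polynomials in the variables x_e (e :: 'e) are represented by their coefficient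
  functions on exponent vectors 'e \<Rightarrow> nat.  mono c \<alpha> is the monomial c x^\<alpha>.\<close>
definition mono :: "'b::zero \<Rightarrow> ('e \<Rightarrow> nat) \<Rightarrow> ('e \<Rightarrow> nat) \<Rightarrow> 'b" where
  "mono c \<alpha> = (\<lambda>\<beta>. if \<beta> = \<alpha> then c else 0)"

definition ind :: "'e set \<Rightarrow> 'e \<Rightarrow> nat" where
  "ind S = (\<lambda>j. if j \<in> S then 1 else 0)"

definition unitv :: "'e \<Rightarrow> 'e \<Rightarrow> nat" where
  "unitv e = (\<lambda>j. if j = e then 1 else 0)"

definition Upoly :: "'v set \<Rightarrow> ('e \<Rightarrow> 'v \<times> 'v) \<Rightarrow> ('e \<Rightarrow> nat) \<Rightarrow> real" where
  "Upoly V ends = (\<Sum>T\<in>spanning_trees V ends. mono 1 (ind (- T)))"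

text \<open>F_{z,m}(x) = sum_{{T1,T2}} L_{T1,T2}(z) prod_{e notin T1 u T2} x_e
   + (sum_{e in E} m_e x_e) U(x), with the product (sum m_e x_e) U(x) expanded
   into monomials.\<close>
definition Fpoly :: "'v set \<Rightarrow> ('e \<Rightarrow> 'v \<times> 'v) \<Rightarrow> (('v set \<times> 'e set) set \<Rightarrow> 'z \<Rightarrow> real)
    \<Rightarrow> 'e set \<Rightarrow> 'z \<Rightarrow> ('e \<Rightarrow> real) \<Rightarrow> ('e \<Rightarrow> nat) \<Rightarrow> real" where
  "Fpoly V ends L E z m =
     (\<Sum>w\<in>spanning_2forests V ends. mono (L w z) (ind (- \<Union>(snd ` w))))
   + (\<Sum>e\<in>E. \<Sum>T\<in>spanning_trees V ends. mono (m e) (\<lambda>j. unitv e j + ind (- T) j))"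

text \<open>A_G: support of F_{z,m} for generic parameters, i.e. the exponents whose
  coefficient (a linear function of (z,m)) is not identically zero.\<close>
definition AG :: "'v set \<Rightarrow> ('e \<Rightarrow> 'v \<times> 'v) \<Rightarrow> (('v set \<times> 'e set) set \<Rightarrow> 'z \<Rightarrow> real)
    \<Rightarrow> 'e set \<Rightarrow> ('e \<Rightarrow> nat) set" where
  "AG V ends L E = {a. \<exists>z m. Fpoly V ends L E z m a \<noteq> 0}"

definition AG1 :: "'v set \<Rightarrow> ('e \<Rightarrow> 'v \<times> 'v) \<Rightarrow> ('e \<Rightarrow> nat) set" where
  "AG1 V ends = {(\<lambda>j. unitv p j + ind (- T) j) | T p. T \<in> spanning_trees V ends \<and> p \<in> T}"

definition AG2 :: "'v set \<Rightarrow> ('e \<Rightarrow> 'v \<times> 'v) \<Rightarrow> ('e \<Rightarrow> nat) set" where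
  "AG2 V ends = {(\<lambda>j. 2 * unitv q j + ind (- (T \<union> {q})) j) | T q. T \<in> spanning_trees V ends \<and> q \<notin> T}"

definition to_real :: "('e::finite \<Rightarrow> nat) \<Rightarrow> real ^ 'e" where
  "to_real a = (\<chi> i. real (a i))"

end

theory Submission
  imports Defs
begin


lemma adj_sym: "(u,v) \<in> adj ends S \<Longrightarrow> (v,u) \<in> adj ends S"
  by (auto simp: adj_def)

lemma conn_refl[simp]: "conn ends S u u" by (simp add: conn_def)

lemma conn_trans: "conn ends S u v \<Longrightarrow> conn ends S v w \<Longrightarrow> conn ends S u w"
  by (auto simp: conn_def)

lemma conn_sym: "conn ends S u v \<Longrightarrow> conn ends S v u"
  unfolding conn_def
proof (induction rule: rtrancl_induct)
  case base then show ?case by simp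
next
  case (step y z)
  then show ?case by (meson adj_sym converse_rtrancl_into_rtrancl)
qed

lemma conn_mono: "S \<subseteq> S' \<Longrightarrow> conn ends S u v \<Longrightarrow> conn ends S' u v"
proof -
  assume "S \<subseteq> S'" "conn ends S u v"
  moreover have "adj ends S \<subseteq> adj ends S'" using \<open>S \<subseteq> S'\<close> by (auto simp: adj_def)
  ultimately show ?thesis unfolding conn_def using rtrancl_mono by blast
qed

lemma conn_empty: "conn ends {} u v \<longleftrightarrow> u = v"
  by (simp add: conn_def adj_def)

lemma adj_insert: "adj ends (insert e F) = adj ends F \<union> {(fst (ends e), snd (ends e)), (snd (ends e), fst (ends e))}"
  by (auto simp: adj_def)

lemma conn_insert:
  fixes x y
  assumes x_def: "x = fst (ends e)" and y_def: "y = snd (ends e)"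
  shows "conn ends (insert e F) u v \<longleftrightarrow> conn ends F u v \<or> (conn ends F u x \<and> conn ends F y v) \<or> (conn ends F u y \<and> conn ends F x v)"
proof
  assume "conn ends (insert e F) u v"
  then have "(u,v) \<in> (adj ends F \<union> {(x,y),(y,x)})\<^sup>*" by (simp add: conn_def adj_insert x_def y_def)
  then show "conn ends F u v \<or> (conn ends F u x \<and> conn ends F y v) \<or> (conn ends F u y \<and> conn ends F x v)"
  proof (induction rule: rtrancl_induct)
    case base then show ?case by simp
  next
    case (step w z)
    from step.hyps(2) consider "(w,z) \<in> adj ends F" | "w = x" "z = y" | "w = y" "z = x" by auto
    then show ?case
    proof cases
      case 1
      then have "conn ends F w z" by (simp add: conn_def)
      then show ?thesis using step.IH conn_trans by metis
    next
      case 2 then show ?thesis using step.IH conn_trans conn_refl by metis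
    next
      case 3 then show ?thesis using step.IH conn_trans conn_refl by metis
    qed
  qed
next
  have e: "conn ends (insert e F) x y" "conn ends (insert e F) y x"
    by (auto simp: conn_def adj_insert x_def y_def)
  have m: "\<And>a b. conn ends F a b \<Longrightarrow> conn ends (insert e F) a b"
    by (meson conn_mono subset_insertI)
  assume "conn ends F u v \<or> (conn ends F u x \<and> conn ends F y v) \<or> (conn ends F u y \<and> conn ends F x v)"
  then show "conn ends (insert e F) u v" using e m conn_trans by metis
qed

definition ncomp :: "('e \<Rightarrow> 'v \<times> 'v) \<Rightarrow> 'e set \<Rightarrow> 'v set \<Rightarrow> nat" where
  "ncomp ends F W = card ((\<lambda>v. {u\<in>W. conn ends F v u}) ` W)"

lemma ncomp_empty: "ncomp ends {} W = card W"
proof -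
  have "(\<lambda>v. {u\<in>W. conn ends {} v u}) ` W = (\<lambda>v. {v}) ` W"
    by (auto simp: conn_empty)
  moreover have "card ((\<lambda>v. {v}) ` W) = card W"
    by (rule card_image) (auto simp: inj_on_def)
  ultimately show ?thesis by (simp add: ncomp_def)
qed

lemma ncomp_insert:
  assumes fin: "finite W" and x: "fst (ends e) \<in> W" and y: "snd (ends e) \<in> W"
    and nc: "\<not> conn ends F (fst (ends e)) (snd (ends e))"
  shows "ncomp ends (insert e F) W + 1 = ncomp ends F W"
proof -
  define x where "x = fst (ends e)"
  define y where "y = snd (ends e)"
  define cl where "cl v = {u\<in>W. conn ends F v u}" for v
  define cl' where "cl' v = {u\<in>W. conn ends (insert e F) v u}" for v
  have nxy: "\<not> conn ends F x y" using nc by (simp add: x_def y_def)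
  have cleq: "cl v = cl w \<longleftrightarrow> conn ends F v w" if "v \<in> W" "w \<in> W" for v w
  proof
    assume "cl v = cl w"
    then have "w \<in> cl v" using that by (simp add: cl_def)
    then show "conn ends F v w" by (simp add: cl_def)
  next
    assume "conn ends F v w"
    then have "conn ends F v u \<longleftrightarrow> conn ends F w u" for u
      by (meson conn_sym conn_trans)
    then show "cl v = cl w" unfolding cl_def by simp
  qed
  have cl'v: "cl' v = (if conn ends F v x \<or> conn ends F v y then cl x \<union> cl y else cl v)" if "v \<in> W" for v
  proof -
    have ci: "conn ends (insert e F) v u \<longleftrightarrow> conn ends F v u \<or> (conn ends F v x \<and> conn ends F y u) \<or> (conn ends F v y \<and> conn ends F x u)" for u
      using conn_insert[of x ends e y F v u] by (simp add: x_def y_def)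
    consider (a) "conn ends F v x" | (b) "conn ends F v y" | (c) "\<not> conn ends F v x" "\<not> conn ends F v y" by blast
    then show ?thesis
    proof cases
      case a
      then have "\<not> conn ends F v y" using nxy by (meson conn_sym conn_trans)
      moreover have "conn ends F v u \<longleftrightarrow> conn ends F x u" for u using a by (meson conn_sym conn_trans)
      ultimately show ?thesis using a unfolding cl'_def cl_def ci by auto
    next
      case b
      then have "\<not> conn ends F v x" using nxy by (meson conn_sym conn_trans)
      moreover have "conn ends F v u \<longleftrightarrow> conn ends F y u" for u using b by (meson conn_sym conn_trans)
      ultimately show ?thesis using b unfolding cl'_def cl_def ci by auto
    next
      case c
      then show ?thesis unfolding cl'_def cl_def ci by auto
    qed
  qed
  define R where "R = {v\<in>W. \<not> conn ends F v x \<and> \<not> conn ends F v y}"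
  have img: "cl' ` W = insert (cl x \<union> cl y) (cl ` R)"
  proof
    show "cl' ` W \<subseteq> insert (cl x \<union> cl y) (cl ` R)"
    proof
      fix z assume "z \<in> cl' ` W"
      then obtain v where v: "v \<in> W" "z = cl' v" by auto
      show "z \<in> insert (cl x \<union> cl y) (cl ` R)"
      proof (cases "conn ends F v x \<or> conn ends F v y")
        case True then show ?thesis using v cl'v[OF v(1)] by simp
      next
        case False
        then have "v \<in> R" using v by (simp add: R_def)
        then show ?thesis using v cl'v[OF v(1)] False by simp
      qed
    qed
    show "insert (cl x \<union> cl y) (cl ` R) \<subseteq> cl' ` W"
    proof -
      have "cl x \<union> cl y = cl' x" using cl'v[OF x[folded x_def]] by simp
      moreover have "cl ` R \<subseteq> cl' ` W"
      proof
        fix z assume "z \<in> cl ` R"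
        then obtain v where v: "v \<in> R" "z = cl v" by auto
        then have "v \<in> W" "z = cl' v" using cl'v by (auto simp: R_def)
        then show "z \<in> cl' ` W" by blast
      qed
      ultimately show ?thesis using x[folded x_def] by blast
    qed
  qed
  have clR: "cl ` R = cl ` W - {cl x, cl y}"
  proof
    show "cl ` R \<subseteq> cl ` W - {cl x, cl y}"
      using cleq x[folded x_def] y[folded y_def] by (auto simp: R_def)
    show "cl ` W - {cl x, cl y} \<subseteq> cl ` R"
    proof
      fix z assume "z \<in> cl ` W - {cl x, cl y}"
      then obtain v where v: "v \<in> W" "z = cl v" "cl v \<noteq> cl x" "cl v \<noteq> cl y" by auto
      then have "v \<in> R" using cleq x[folded x_def] y[folded y_def] by (auto simp: R_def)
      then show "z \<in> cl ` R" using v by auto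
    qed
  qed
  have notin: "cl x \<union> cl y \<notin> cl ` R"
  proof
    assume "cl x \<union> cl y \<in> cl ` R"
    then obtain v where v: "v \<in> R" "cl v = cl x \<union> cl y" by auto
    then have "x \<in> cl v" using x[folded x_def] by (auto simp: cl_def)
    then have "conn ends F v x" by (simp add: cl_def)
    then show False using v R_def by auto
  qed
  have neq: "cl x \<noteq> cl y" using cleq x[folded x_def] y[folded y_def] nxy by blast
  have fin2: "finite (cl ` W)" using fin by simp
  have "card (cl ` W - {cl x, cl y}) + 2 = card (cl ` W)"
  proof -
    have sub: "{cl x, cl y} \<subseteq> cl ` W" using x[folded x_def] y[folded y_def] by auto
    have c2: "card {cl x, cl y} = 2" using neq by simp
    have "card (cl ` W - {cl x, cl y}) = card (cl ` W) - card {cl x, cl y}"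
      using sub by (intro card_Diff_subset) auto
    moreover have "card {cl x, cl y} \<le> card (cl ` W)"
      using sub fin2 by (intro card_mono)
    ultimately show ?thesis using c2 by linarith
  qed
  moreover have "card (cl' ` W) = card (cl ` R) + 1"
    using img notin fin2 clR by (simp add: card_insert_if)
  ultimately have "card (cl' ` W) + 1 = card (cl ` W)" using clR by simp
  moreover have "ncomp ends (insert e F) W = card (cl' ` W)" unfolding ncomp_def cl'_def by simp
  moreover have "ncomp ends F W = card (cl ` W)" unfolding ncomp_def cl_def by simp
  ultimately show ?thesis by simp
qed

lemma acyclic_mono: "acyclic_edges ends S \<Longrightarrow> S' \<subseteq> S \<Longrightarrow> acyclic_edges ends S'"
proof -
  assume a: "acyclic_edges ends S" "S' \<subseteq> S"
  show ?thesis unfolding acyclic_edges_def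
  proof
    fix e assume "e \<in> S'"
    have "S' - {e} \<subseteq> S - {e}" using a by blast
    moreover have "\<not> conn ends (S - {e}) (fst (ends e)) (snd (ends e))"
      using a \<open>e \<in> S'\<close> unfolding acyclic_edges_def by auto
    ultimately show "\<not> conn ends (S' - {e}) (fst (ends e)) (snd (ends e))"
      using conn_mono by metis
  qed
qed

lemma ncomp_acyclic:
  assumes "finite W" "finite F" "acyclic_edges ends F" "\<forall>e\<in>F. fst (ends e) \<in> W \<and> snd (ends e) \<in> W"
  shows "ncomp ends F W + card F = card W"
  using assms(2,3,4)
proof (induction F rule: finite_induct)
  case empty then show ?case by (simp add: ncomp_empty)
next
  case (insert e F)
  have ac: "acyclic_edges ends F" using insert.prems(1) acyclic_mono subset_insertI by metis
  have "\<not> conn ends (insert e F - {e}) (fst (ends e)) (snd (ends e))"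
    using insert.prems(1) unfolding acyclic_edges_def by (meson insertI1)
  moreover have "insert e F - {e} = F" using insert.hyps(2) by simp
  ultimately have nc: "\<not> conn ends F (fst (ends e)) (snd (ends e))" by simp
  have ew: "fst (ends e) \<in> W" "snd (ends e) \<in> W" using insert.prems(2) by simp_all
  have "ncomp ends (insert e F) W + 1 = ncomp ends F W"
    by (rule ncomp_insert[OF assms(1) ew nc])
  moreover have "ncomp ends F W + card F = card W"
    using insert.IH ac insert.prems(2) by simp
  ultimately show ?case using insert.hyps by simp
qed

lemma tree_card:
  assumes "finite W" "W \<noteq> {}" "finite F" "acyclic_edges ends F"
    "\<forall>e\<in>F. fst (ends e) \<in> W \<and> snd (ends e) \<in> W"
    "\<forall>u\<in>W. \<forall>v\<in>W. conn ends F u v"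
  shows "card F + 1 = card W"
proof -
  obtain v0 where v0: "v0 \<in> W" using assms(2) by blast
  have eq: "{u\<in>W. conn ends F v u} = W" if "v \<in> W" for v
    using that assms(6) by blast
  have "(\<lambda>v. {u\<in>W. conn ends F v u}) ` W = (\<lambda>v. W) ` W"
    by (rule image_cong) (use eq in auto)
  also have "\<dots> = {W}" using v0 by blast
  finally have "ncomp ends F W = 1" by (simp add: ncomp_def)
  then show ?thesis using ncomp_acyclic[OF assms(1,3,4,5)] by simp
qed



lemma sum_fun_apply: "(sum f A) x = sum (\<lambda>a. f a x) A"
  for f :: "'a \<Rightarrow> 'b \<Rightarrow> 'c::comm_monoid_add"
  by (induction A rule: infinite_finite_induct) auto

lemma Fpoly_apply:
  "Fpoly V ends L E z m b =
     (\<Sum>w\<in>spanning_2forests V ends. if b = ind (- \<Union>(snd ` w)) then L w z else 0)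
   + (\<Sum>e\<in>E. \<Sum>T\<in>spanning_trees V ends. if b = (\<lambda>j. unitv e j + ind (- T) j) then m e else 0)"
  by (simp add: Fpoly_def sum_fun_apply mono_def)

lemma AG_cases:
  assumes "b \<in> AG V ends L E"
  shows "(\<exists>w\<in>spanning_2forests V ends. b = ind (- \<Union>(snd ` w))) \<or>
         (\<exists>e\<in>E. \<exists>T\<in>spanning_trees V ends. b = (\<lambda>j. unitv e j + ind (- T) j))"
proof (rule ccontr)
  assume n: "\<not> ?thesis"
  from assms obtain z m where "Fpoly V ends L E z m b \<noteq> 0" by (auto simp: AG_def)
  moreover have "Fpoly V ends L E z m b = 0"
    unfolding Fpoly_apply using n by (auto intro!: sum.neutral)
  ultimately show False by simp
qed

lemma card_compl: "card (- X) = CARD('e) - card (X :: 'e::finite set)"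
proof -
  have "- X = UNIV - X" by auto
  then show ?thesis by (simp add: card_Diff_subset)
qed

lemma tree_size:
  assumes "finite V" "V \<noteq> {}" "\<forall>e. fst (ends e) \<in> V \<and> snd (ends e) \<in> V"
    "T \<in> spanning_trees V ends"
  shows "card (T :: 'e::finite set) + 1 = card V"
  using assms by (intro tree_card) (auto simp: spanning_trees_def)

lemma forest_size:
  assumes "finite V" "w \<in> spanning_2forests V ends"
  shows "card (\<Union>(snd ` w) :: 'e::finite set) + 2 = card V"
proof -
  obtain V1 T1 V2 T2 where w: "w = {(V1, T1), (V2, T2)}" "V1 \<inter> V2 = {}" "V1 \<union> V2 = V"
    "T1 \<inter> T2 = {}" "is_subtree ends V1 T1" "is_subtree ends V2 T2"
    using assms(2) unfolding spanning_2forests_def by blast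
  have f1: "finite V1" "finite V2" using assms(1) w(3) by (auto intro: finite_subset)
  have c1: "card T1 + 1 = card V1"
    using w(5) f1 by (intro tree_card) (auto simp: is_subtree_def)
  have c2: "card T2 + 1 = card V2"
    using w(6) f1 by (intro tree_card) (auto simp: is_subtree_def)
  have "\<Union>(snd ` w) = T1 \<union> T2" using w(1) by auto
  then have "card (\<Union>(snd ` w)) = card T1 + card T2" using w(4) by (simp add: card_Un_disjoint)
  moreover have "card V = card V1 + card V2" using w(2,3) f1 by (metis card_Un_disjoint)
  ultimately show ?thesis using c1 c2 by simp
qed

lemma forests_finite:
  fixes ends :: "'e::finite \<Rightarrow> 'v \<times> 'v"
  assumes "finite V"
  shows "finite (spanning_2forests V ends)"
proof -
  have "spanning_2forests V ends \<subseteq> Pow (Pow V \<times> UNIV)"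
    unfolding spanning_2forests_def by blast
  moreover have "finite (Pow (Pow V \<times> (UNIV :: 'e set set)))" using assms by (simp add: finite_cartesian_product)
  ultimately show ?thesis by (rule finite_subset)
qed


lemma m_indep_excl:
  fixes ends :: "'e::finite \<Rightarrow> 'v \<times> 'v"
  assumes indep: "\<forall>z m m'. Fpoly V ends L E z m a = Fpoly V ends L E z m' a"
    and T: "T \<in> spanning_trees V ends" and rT: "r \<in> T"
    and a: "a = (\<lambda>j. unitv r j + ind (- T) j)"
  shows "r \<notin> E"
proof
  assume rE: "r \<in> E"
  define m1 where "m1 = (\<lambda>j::'e. if j = r then (1::real) else 0)"
  have inner_pos: "0 < (\<Sum>T\<in>spanning_trees V ends. if a = (\<lambda>j. unitv r j + ind (- T) j) then m1 r else 0)"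
    by (rule sum_pos2[OF _ T]) (auto simp: a m1_def)
  have pos: "0 < (\<Sum>e\<in>E. \<Sum>T\<in>spanning_trees V ends. if a = (\<lambda>j. unitv e j + ind (- T) j) then m1 e else 0)"
    by (rule sum_pos2[where i=r]) (use rE inner_pos in \<open>auto simp: m1_def intro!: sum_nonneg\<close>)
  have "Fpoly V ends L E undefined m1 a \<noteq> Fpoly V ends L E undefined (\<lambda>_. 0) a"
  proof -
    have "Fpoly V ends L E undefined (\<lambda>_. 0) a =
      (\<Sum>w\<in>spanning_2forests V ends. if a = ind (- \<Union>(snd ` w)) then L w undefined else 0)"
      by (simp add: Fpoly_apply)
    moreover have "Fpoly V ends L E undefined m1 a =
      (\<Sum>w\<in>spanning_2forests V ends. if a = ind (- \<Union>(snd ` w)) then L w undefined else 0)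
      + (\<Sum>e\<in>E. \<Sum>T\<in>spanning_trees V ends. if a = (\<lambda>j. unitv e j + ind (- T) j) then m1 e else 0)"
      by (rule Fpoly_apply)
    ultimately show ?thesis using pos by linarith
  qed
  then show False using indep by blast
qed

theorem mainTheorem17:
  fixes V :: "'v set"
    and ends :: "'e::finite \<Rightarrow> 'v \<times> 'v"
    and L :: "('v set \<times> 'e set) set \<Rightarrow> real ^ 'k::finite \<Rightarrow> real"
    and E :: "'e set"
    and a :: "'e \<Rightarrow> nat"
  assumes "finite V" and "V \<noteq> {}"
    and "\<forall>e. fst (ends e) \<in> V \<and> snd (ends e) \<in> V"
    and "\<forall>u\<in>V. \<forall>v\<in>V. conn ends UNIV u v"
    and "\<forall>w\<in>spanning_2forests V ends. linear (L w)"
    and "a \<in> AG V ends L E"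
    and "a \<in> AG1 V ends"
    and "\<forall>z m m'. Fpoly V ends L E z m a = Fpoly V ends L E z m' a"
  shows "to_real a extreme_point_of (convex hull (to_real ` AG V ends L E))"
proof -
  define n where "n = CARD('e)"
  define N where "N = card V"
  obtain T0 p where T0: "T0 \<in> spanning_trees V ends" "p \<in> T0" "a = (\<lambda>j. unitv p j + ind (- T0) j)"
    using assms(7) unfolding AG1_def by blast
  define S where "S = insert p (- T0)"
  have ind_ins: "(\<lambda>j. unitv q j + ind Y j) = ind (insert q Y)" if "q \<notin> Y" for q Y
    using that by (auto simp: fun_eq_iff unitv_def ind_def)
  have aS: "a = ind S" using T0 ind_ins[of p "- T0"] unfolding S_def by simp
  have ind_inj: "ind X = ind Y \<Longrightarrow> X = Y" for X Y :: "'e set"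
    by (auto simp: fun_eq_iff ind_def split: if_splits)
  have cle: "card X \<le> n" for X :: "'e set" unfolding n_def by (rule card_mono) auto
  have tsz: "card T + 1 = N" if "T \<in> spanning_trees V ends" for T
    unfolding N_def using tree_size[OF assms(1,2,3) that] .
  have cS: "card S = n - card T0 + 1"
    using T0(2) by (simp add: S_def card_compl n_def)
  define c where "c j = (if j \<in> S then (if j \<in> E then 0 else 1) else (-2::real))" for j
  define g where "g b = (\<Sum>j\<in>UNIV. c j * real (b j))" for b :: "'e \<Rightarrow> nat"
  have g_ind: "g (ind X) = sum c X" for X
  proof -
    have "g (ind X) = (\<Sum>j\<in>UNIV. if j \<in> X then c j else 0)"
      unfolding g_def ind_def by (intro sum.cong) auto
    also have "\<dots> = sum c (UNIV \<inter> X)" by (rule sum.inter_restrict[symmetric]) simp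
    finally show ?thesis by simp
  qed
  have g_u: "g (\<lambda>j. unitv q j + ind Y j) = c q + sum c Y" for q Y
  proof -
    have "g (\<lambda>j. unitv q j + ind Y j) = (\<Sum>j\<in>UNIV. c j * real (unitv q j)) + g (ind Y)"
      unfolding g_def by (simp add: sum.distrib distrib_left)
    also have "(\<Sum>j\<in>UNIV. c j * real (unitv q j)) = c q"
      unfolding unitv_def by (simp add: if_distrib cong: if_cong)
    finally show ?thesis using g_ind by simp
  qed
  have cnn: "j \<in> S \<Longrightarrow> 0 \<le> c j" for j by (simp add: c_def)
  have bound: "sum c X \<le> sum c S - 2" if "\<not> X \<subseteq> S" for X
  proof -
    have "sum c X = sum c (X \<inter> S) + sum c (X - S)" by (simp add: sum.Int_Diff)
    moreover have "sum c (X \<inter> S) \<le> sum c S"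
      by (rule sum_mono2) (auto simp: cnn)
    moreover have "sum c (X - S) = - 2 * real (card (X - S))"
      by (simp add: c_def)
    moreover have "card (X - S) \<ge> 1"
      using that by (simp add: Suc_le_eq card_gt_0_iff)
    ultimately show ?thesis by simp
  qed
  have eqcard: "sum c X < sum c S" if "card X = card S" "X \<noteq> S" for X
  proof (cases "X \<subseteq> S")
    case True
    then have "X = S" using that(1) by (intro card_subset_eq) auto
    then show ?thesis using that(2) by simp
  next
    case False then show ?thesis using bound by force
  qed
  have main: "g b < g a" if b: "b \<in> AG V ends L E" "b \<noteq> a" for b
    using AG_cases[OF b(1)]
  proof
    assume "\<exists>w\<in>spanning_2forests V ends. b = ind (- \<Union>(snd ` w))"
    then obtain w where w: "w \<in> spanning_2forests V ends" "b = ind (- \<Union>(snd ` w))" by blast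
    have cw: "card (\<Union>(snd ` w)) + 2 = N" using forest_size[OF assms(1) w(1)] N_def by simp
    have "card (- \<Union>(snd ` w)) = n - card (\<Union>(snd ` w))"
      unfolding n_def by (rule card_compl)
    then have "card (- \<Union>(snd ` w)) = card S"
      using cw cS tsz[OF T0(1)] cle[of T0] by linarith
    moreover have "- \<Union>(snd ` w) \<noteq> S" using b(2) w(2) aS by auto
    ultimately show ?thesis using eqcard w(2) aS g_ind by simp
  next
    assume "\<exists>e\<in>E. \<exists>T\<in>spanning_trees V ends. b = (\<lambda>j. unitv e j + ind (- T) j)"
    then obtain q T where qT: "q \<in> E" "T \<in> spanning_trees V ends" "b = (\<lambda>j. unitv q j + ind (- T) j)"
      by blast
    have cT: "card T = card T0" using tsz[OF qT(2)] tsz[OF T0(1)] by simp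
    show ?thesis
    proof (cases "q \<in> T")
      case True
      then have bi: "b = ind (insert q (- T))" using qT(3) ind_ins[of q "- T"] by simp
      have "card (insert q (- T)) = card S"
        using True cS cT by (simp add: card_compl n_def)
      moreover have "insert q (- T) \<noteq> S" using b(2) bi aS by auto
      ultimately show ?thesis using eqcard bi aS g_ind by simp
    next
      case False
      have gb: "g b = c q + sum c (- T)" using qT(3) g_u by simp
      have cq: "c q \<le> 0" using qT(1) by (simp add: c_def)
      have cY: "card (- T) + 1 = card S"
        using cS cT cle[of T0] T0(2) by (simp add: card_compl n_def)
      show ?thesis
      proof (cases "- T \<subseteq> S")
        case False
        then show ?thesis using bound[OF False] gb cq aS g_ind by simp
      next
        case True
        have "card (S - (- T)) = card S - card (- T)" using True by (intro card_Diff_subset) auto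
        then have "card (S - (- T)) = 1" using cY by linarith
        then obtain r where r: "S - (- T) = {r}" by (rule card_1_singletonE)
        then have rS: "r \<in> S" and rT: "r \<in> T" by auto
        have Sr: "S = insert r (- T)" using r True by blast
        have "a = (\<lambda>j. unitv r j + ind (- T) j)" using aS Sr ind_ins[of r "- T"] rT by simp
        then have "r \<notin> E" using m_indep_excl[OF assms(8) qT(2) rT] by simp
        then have cr: "c r = 1" using rS by (simp add: c_def)
        have "sum c S = c r + sum c (- T)" using Sr rT by simp
        then show ?thesis using gb cq cr aS g_ind by simp
      qed
    qed
  qed
  define A where "A = AG V ends L E"
  have finA: "finite A"
  proof -
    have "A \<subseteq> (\<lambda>w. ind (- \<Union>(snd ` w))) ` spanning_2forests V ends \<union>
              (\<lambda>(e, T). (\<lambda>j. unitv e j + ind (- T) j)) ` (E \<times> spanning_trees V ends)"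
      unfolding A_def using AG_cases by fastforce
    moreover have "finite (spanning_2forests V ends)" by (rule forests_finite[OF assms(1)])
    ultimately show ?thesis by (meson finite_subset finite_UnI finite_imageI finite)
  qed
  define cv where "cv = (\<chi> j. c j)"
  have inn: "inner cv (to_real b) = g b" for b
    by (simp add: inner_vec_def to_real_def g_def cv_def)
  have "convex hull (to_real ` (A - {a})) \<subseteq> {y. inner cv y < g a}"
    by (rule hull_minimal) (auto simp: inn convex_halfspace_lt A_def intro: main)
  then have notin: "to_real a \<notin> convex hull (to_real ` (A - {a}))" using inn by force
  have "to_real a extreme_point_of (convex hull (insert (to_real a) (to_real ` (A - {a}))))"
    by (rule extreme_point_of_convex_hull_insert) (use finA notin in auto)
  moreover have "insert (to_real a) (to_real ` (A - {a})) = to_real ` A"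
    using assms(6) unfolding A_def by blast
  ultimately show ?thesis unfolding A_def by simp
qed
end
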